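(* Let $q\ge2$, $N=2^q$, $b>0$, $h=b/N$, and let $A_q=h^2B_h$, where $B_h=(b_{i,j})_{i,j=1}^{N-1}$ is the symmetric Toeplitz matrix with $b_{i,i}=\frac{2N}3-1$, $b_{i,j}=\frac N6-1$ if $|i-j|=1$, and $b_{i,j}=-1$ if $|i-j|\ge2$. Let $D_q$ be the diagonal of $A_q$, let $\eta_0$ satisfy $\lambda_{\max}(D_q^{-1}A_q)\le\eta_0<3$, let $0<\omega<2/\eta_0$, let $0<\eta\le\omega(2-\omega\eta_0)$, and let $K_q=I-\omega D_q^{-1}A_q$. Then $\|K_q\nu\|_{A_q}^2\le\|\nu\|_{A_q}^2-\eta\|A_q\nu\|_{D_q^{-1}}^2$ for all $\nu\in\mathbb R^{N-1}$, and $$\|K_qT^q\|_{A_q}\le\sqrt{1-\eta/4}<1.$$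
   Context: For a symmetric positive definite $M$, $\|\nu\|_M=\sqrt{\nu^TM\nu}$ and for a matrix $X$, $\|X\|_M$ is the induced operator norm. The restriction $I_q^{q-1}:\mathbb R^{N-1}\to\mathbb R^{N/2-1}$ is $(I_q^{q-1}\nu)_i=\frac14(\nu_{2i-1}+2\nu_{2i}+\nu_{2i+1})$, the prolongation is $I_{q-1}^q=2(I_q^{q-1})^T$, the coarse matrix is $A_{q-1}=I_q^{q-1}A_qI_{q-1}^q$, and $T^q=I-I_{q-1}^qA_{q-1}^{-1}I_q^{q-1}A_q$. $K_q$ is the damped Jacobi iteration matrix and $K_qT^q$ the two-grid iteration matrix. $A_q$ is the piecewise linear finite element stiffness matrix of the nonlocal operator $u\mapsto\int_0^b[u(x)-u(y)]dy$ with zero exterior condition. *)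

theory Defs
  imports "Jordan_Normal_Form.Matrix" "Jordan_Normal_Form.Char_Poly"
begin

text \<open>Matrices/vectors use 0-based indices; paper index i corresponds to i-1.\<close>

definition Bmat :: "nat \<Rightarrow> real mat" where
  "Bmat N = mat (N-1) (N-1) (\<lambda>(i,j).
     if i = j then 2 * real N / 3 - 1
     else if i = j + 1 \<or> j = i + 1 then real N / 6 - 1
     else -1)"

definition Aq :: "nat \<Rightarrow> real \<Rightarrow> real mat" where
  "Aq q b = (let N = 2^q; h = b / real N in h^2 \<cdot>\<^sub>m Bmat N)"

definition diagpart :: "real mat \<Rightarrow> real mat" where
  "diagpart A = mat (dim_row A) (dim_col A) (\<lambda>(i,j). if i = j then A $$ (i,i) else 0)"

definition diag_inv :: "real mat \<Rightarrow> real mat" where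
  "diag_inv D = mat (dim_row D) (dim_col D) (\<lambda>(i,j). if i = j then 1 / D $$ (i,i) else 0)"

definition minv :: "real mat \<Rightarrow> real mat" where
  "minv A = (SOME B. B \<in> carrier_mat (dim_row A) (dim_row A) \<and>
                      A * B = 1\<^sub>m (dim_row A) \<and> B * A = 1\<^sub>m (dim_row A))"

text \<open>Restriction I_q^{q-1}: (N/2-1) x (N-1), (I v)_i = (v_{2i-1} + 2 v_{2i} + v_{2i+1})/4 (1-based).\<close>
definition restr :: "nat \<Rightarrow> real mat" where
  "restr q = mat (2^q div 2 - 1) (2^q - 1) (\<lambda>(i,j).
     if j = 2*i \<or> j = 2*i + 2 then 1/4 else if j = 2*i + 1 then 1/2 else 0)"

definition prolong :: "nat \<Rightarrow> real mat" where
  "prolong q = 2 \<cdot>\<^sub>m transpose_mat (restr q)"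

definition Acoarse :: "nat \<Rightarrow> real \<Rightarrow> real mat" where
  "Acoarse q b = restr q * Aq q b * prolong q"

definition Tq :: "nat \<Rightarrow> real \<Rightarrow> real mat" where
  "Tq q b = 1\<^sub>m (2^q - 1) - prolong q * minv (Acoarse q b) * restr q * Aq q b"

definition Kq :: "nat \<Rightarrow> real \<Rightarrow> real \<Rightarrow> real mat" where
  "Kq q b \<omega> = 1\<^sub>m (2^q - 1) - \<omega> \<cdot>\<^sub>m (diag_inv (diagpart (Aq q b)) * Aq q b)"

definition vnormM :: "real mat \<Rightarrow> real vec \<Rightarrow> real" where
  "vnormM M v = sqrt (v \<bullet> (M *\<^sub>v v))"

definition opnormM :: "real mat \<Rightarrow> real mat \<Rightarrow> real" where
  "opnormM M X = Sup {vnormM M (X *\<^sub>v v) / vnormM M v | v.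
                       v \<in> carrier_vec (dim_col X) \<and> v \<noteq> 0\<^sub>v (dim_col X)}"

definition lambda_max :: "real mat \<Rightarrow> real" where
  "lambda_max M = Max {k. eigenvalue M k}"

end

theory Submission
  imports Defs "HOL-Analysis.Function_Topology"
begin
lemma sp_self_nonneg: "(v::real vec) \<bullet> v \<ge> 0"
  unfolding scalar_prod_def by (auto intro: sum_nonneg)

lemma sym_sp:
  fixes A :: "real mat"
  assumes A: "A \<in> carrier_mat n n" and sym: "transpose_mat A = A"
    and x: "x \<in> carrier_vec n" and y: "y \<in> carrier_vec n"
  shows "x \<bullet> (A *\<^sub>v y) = y \<bullet> (A *\<^sub>v x)"
proof -
  have "x \<bullet> (A *\<^sub>v y) = (transpose_mat A *\<^sub>v x) \<bullet> y"
    using transpose_vec_mult_scalar[OF A y x] by simp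
  also have "\<dots> = y \<bullet> (A *\<^sub>v x)" using sym A x y by (simp add: comm_scalar_prod[of _ n])
  finally show ?thesis .
qed

lemma quad_expand:
  fixes A :: "real mat"
  assumes A: "A \<in> carrier_mat n n" and sym: "transpose_mat A = A"
    and x: "x \<in> carrier_vec n" and y: "y \<in> carrier_vec n"
  shows "(x - c \<cdot>\<^sub>v y) \<bullet> (A *\<^sub>v (x - c \<cdot>\<^sub>v y))
     = x \<bullet> (A *\<^sub>v x) - 2 * c * (y \<bullet> (A *\<^sub>v x)) + c^2 * (y \<bullet> (A *\<^sub>v y))"
proof -
  have cy: "c \<cdot>\<^sub>v y \<in> carrier_vec n" using y by simp
  have Ax: "A *\<^sub>v x \<in> carrier_vec n" and Ay: "A *\<^sub>v y \<in> carrier_vec n" using A x y by auto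
  have e1: "A *\<^sub>v (x - c \<cdot>\<^sub>v y) = A *\<^sub>v x - c \<cdot>\<^sub>v (A *\<^sub>v y)"
    using mult_minus_distrib_mat_vec[OF A x cy] A y by (simp add: mult_mat_vec)
  have "(x - c \<cdot>\<^sub>v y) \<bullet> (A *\<^sub>v x - c \<cdot>\<^sub>v (A *\<^sub>v y))
     = x \<bullet> (A *\<^sub>v x) - c * (x \<bullet> (A *\<^sub>v y)) - c * (y \<bullet> (A *\<^sub>v x)) + c * c * (y \<bullet> (A *\<^sub>v y))"
    using x y Ax Ay cy
    by (simp add: minus_scalar_prod_distrib[of _ n] scalar_prod_minus_distrib[of _ n] algebra_simps)
  moreover have "x \<bullet> (A *\<^sub>v y) = y \<bullet> (A *\<^sub>v x)" by (rule sym_sp[OF A sym x y])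
  ultimately show ?thesis unfolding e1 by (simp add: power2_eq_square algebra_simps)
qed

lemma smult_mat_vec:
  fixes A :: "real mat"
  assumes "A \<in> carrier_mat nr nc" "v \<in> carrier_vec nc"
  shows "(k \<cdot>\<^sub>m A) *\<^sub>v v = k \<cdot>\<^sub>v (A *\<^sub>v v)"
  by (rule eq_vecI) (insert assms, auto simp: mult_mat_vec_def scalar_prod_def sum_distrib_left ac_simps intro!: sum.cong)

lemma smoothing_abs:
  fixes A :: "real mat"
  assumes A: "A \<in> carrier_mat n n" and sym: "transpose_mat A = A"
    and ray: "\<forall>u\<in>carrier_vec n. u \<bullet> (A *\<^sub>v u) \<le> \<eta>0 * d * (u \<bullet> u)"
    and d: "d > 0" and om: "0 < \<omega>" and eta: "\<eta> \<le> \<omega> * (2 - \<omega> * \<eta>0)"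
    and v: "v \<in> carrier_vec n"
  shows "((1\<^sub>m n - (\<omega>/d) \<cdot>\<^sub>m A) *\<^sub>v v) \<bullet> (A *\<^sub>v ((1\<^sub>m n - (\<omega>/d) \<cdot>\<^sub>m A) *\<^sub>v v))
     \<le> v \<bullet> (A *\<^sub>v v) - \<eta> / d * ((A *\<^sub>v v) \<bullet> (A *\<^sub>v v))"
proof -
  let ?u = "A *\<^sub>v v"
  have u: "?u \<in> carrier_vec n" using A v by auto
  have K: "(1\<^sub>m n - (\<omega>/d) \<cdot>\<^sub>m A) *\<^sub>v v = v - (\<omega>/d) \<cdot>\<^sub>v ?u"
    using A v by (simp add: minus_mult_distrib_mat_vec[of _ n n] smult_mat_vec[of _ n n])
  have e: "(v - (\<omega>/d) \<cdot>\<^sub>v ?u) \<bullet> (A *\<^sub>v (v - (\<omega>/d) \<cdot>\<^sub>v ?u))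
     = v \<bullet> ?u - 2 * (\<omega>/d) * (?u \<bullet> ?u) + (\<omega>/d)^2 * (?u \<bullet> (A *\<^sub>v ?u))"
    by (rule quad_expand[OF A sym v u])
  have r: "?u \<bullet> (A *\<^sub>v ?u) \<le> \<eta>0 * d * (?u \<bullet> ?u)" using ray u by auto
  have uu: "?u \<bullet> ?u \<ge> 0" by (rule sp_self_nonneg)
  have "(\<omega>/d)^2 * (?u \<bullet> (A *\<^sub>v ?u)) \<le> (\<omega>/d)^2 * (\<eta>0 * d * (?u \<bullet> ?u))"
    by (rule mult_left_mono[OF r], simp)
  also have "\<dots> = \<omega> * \<omega> * \<eta>0 / d * (?u \<bullet> ?u)" using d by (simp add: power2_eq_square field_simps)
  finally have t: "(\<omega>/d)^2 * (?u \<bullet> (A *\<^sub>v ?u)) \<le> \<omega> * \<omega> * \<eta>0 / d * (?u \<bullet> ?u)" .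
  have "\<eta> / d * (?u \<bullet> ?u) \<le> (\<omega> * (2 - \<omega> * \<eta>0)) / d * (?u \<bullet> ?u)"
    by (rule mult_right_mono[OF divide_right_mono[OF eta] uu], use d in simp)
  moreover have "\<omega> * (2 - \<omega> * \<eta>0) / d * (?u \<bullet> ?u) = 2 * (\<omega>/d) * (?u \<bullet> ?u) - \<omega> * \<omega> * \<eta>0 / d * (?u \<bullet> ?u)"
    using d by (simp add: field_simps)
  ultimately show ?thesis unfolding K e using t by linarith
qed

lemma twogrid_abs:
  fixes A P R G :: "real mat"
  assumes A: "A \<in> carrier_mat n n" and sym: "transpose_mat A = A"
    and psd: "\<forall>u\<in>carrier_vec n. 0 \<le> u \<bullet> (A *\<^sub>v u)"
    and R: "R \<in> carrier_mat nc n" and PR: "P = 2 \<cdot>\<^sub>m transpose_mat R"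
    and G: "G \<in> carrier_mat nc nc" and AcG: "(R * A * P) * G = 1\<^sub>m nc"
    and approx: "\<forall>w\<in>carrier_vec n. \<exists>z\<in>carrier_vec nc.
         d * ((w - P *\<^sub>v z) \<bullet> (w - P *\<^sub>v z)) \<le> 4 * (w \<bullet> (A *\<^sub>v w))"
    and ray: "\<forall>u\<in>carrier_vec n. u \<bullet> (A *\<^sub>v u) \<le> \<eta>0 * d * (u \<bullet> u)"
    and d: "d > 0" and om: "0 < \<omega>" and eta: "\<eta> \<le> \<omega> * (2 - \<omega> * \<eta>0)"
    and eta4: "\<eta> \<le> 4" and eta0: "0 \<le> \<eta>"
    and v: "v \<in> carrier_vec n"
  shows "(((1\<^sub>m n - (\<omega>/d) \<cdot>\<^sub>m A) * (1\<^sub>m n - P * G * R * A)) *\<^sub>v v) \<bullet>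
           (A *\<^sub>v (((1\<^sub>m n - (\<omega>/d) \<cdot>\<^sub>m A) * (1\<^sub>m n - P * G * R * A)) *\<^sub>v v))
     \<le> (1 - \<eta>/4) * (v \<bullet> (A *\<^sub>v v))"
proof -
  have P: "P \<in> carrier_mat n nc" using R PR by auto
  define z0 where "z0 = G *\<^sub>v (R *\<^sub>v (A *\<^sub>v v))"
  have z0: "z0 \<in> carrier_vec nc" using G R A v unfolding z0_def by auto
  define w where "w = v - P *\<^sub>v z0"
  have Pz0: "P *\<^sub>v z0 \<in> carrier_vec n" using P z0 by auto
  have w: "w \<in> carrier_vec n" using v Pz0 unfolding w_def by auto
  have Tv: "(1\<^sub>m n - P * G * R * A) *\<^sub>v v = w"
  proof -
    have M: "P * G * R * A \<in> carrier_mat n n" using P G R A by auto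
    have "(1\<^sub>m n - P * G * R * A) *\<^sub>v v = v - (P * G * R * A) *\<^sub>v v"
      using minus_mult_distrib_mat_vec[OF one_carrier_mat M v] v by simp
    also have "(P * G * R * A) *\<^sub>v v = P *\<^sub>v z0"
    proof -
      have c1: "P * G \<in> carrier_mat n nc" using P G by auto
      have c2: "P * G * R \<in> carrier_mat n n" using c1 R by auto
      have x: "A *\<^sub>v v \<in> carrier_vec n" using A v by auto
      have y: "R *\<^sub>v (A *\<^sub>v v) \<in> carrier_vec nc" using R x by auto
      have "(P * G * R * A) *\<^sub>v v = (P * G * R) *\<^sub>v (A *\<^sub>v v)" by (rule assoc_mult_mat_vec[OF c2 A v])
      also have "\<dots> = (P * G) *\<^sub>v (R *\<^sub>v (A *\<^sub>v v))" by (rule assoc_mult_mat_vec[OF c1 R x])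
      also have "\<dots> = P *\<^sub>v z0" unfolding z0_def by (rule assoc_mult_mat_vec[OF P G y])
      finally show ?thesis .
    qed
    finally show ?thesis unfolding w_def .
  qed
  have Aw: "A *\<^sub>v w \<in> carrier_vec n" using A w by auto
  \<comment> \<open>Galerkin orthogonality\<close>
  have RAw: "R *\<^sub>v (A *\<^sub>v w) = 0\<^sub>v nc"
  proof -
    let ?y = "R *\<^sub>v (A *\<^sub>v v)"
    have y: "?y \<in> carrier_vec nc" using R A v by auto
    have "(R * A * P) *\<^sub>v (G *\<^sub>v ?y) = ((R * A * P) * G) *\<^sub>v ?y"
      using R A P G y by (simp add: assoc_mult_mat_vec[of _ nc nc _ nc])
    also have "\<dots> = ?y" using AcG y by simp
    finally have 1: "(R * A * P) *\<^sub>v z0 = ?y" unfolding z0_def .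
    have RAP: "(R * A * P) *\<^sub>v z0 = R *\<^sub>v (A *\<^sub>v (P *\<^sub>v z0))"
    proof -
      have c: "R * A \<in> carrier_mat nc n" using R A by auto
      have "(R * A * P) *\<^sub>v z0 = (R * A) *\<^sub>v (P *\<^sub>v z0)" by (rule assoc_mult_mat_vec[OF c P z0])
      also have "\<dots> = R *\<^sub>v (A *\<^sub>v (P *\<^sub>v z0))" by (rule assoc_mult_mat_vec[OF R A Pz0])
      finally show ?thesis .
    qed
    have "R *\<^sub>v (A *\<^sub>v w) = ?y - (R * A * P) *\<^sub>v z0"
      unfolding RAP using R A P z0 v Pz0 unfolding w_def
      by (simp add: mult_minus_distrib_mat_vec[of _ n n] mult_minus_distrib_mat_vec[of _ nc n])
    then show ?thesis using 1 y by simp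
  qed
  have orth: "(P *\<^sub>v z) \<bullet> (A *\<^sub>v w) = 0" if z: "z \<in> carrier_vec nc" for z
  proof -
    have "(P *\<^sub>v z) = 2 \<cdot>\<^sub>v (transpose_mat R *\<^sub>v z)" using PR R z by auto
    moreover have Rz: "transpose_mat R *\<^sub>v z \<in> carrier_vec n" using R z by auto
    ultimately have "(P *\<^sub>v z) \<bullet> (A *\<^sub>v w) = 2 * ((transpose_mat R *\<^sub>v z) \<bullet> (A *\<^sub>v w))"
      using smult_scalar_prod_distrib[OF Rz Aw] by simp
    also have "(transpose_mat R *\<^sub>v z) \<bullet> (A *\<^sub>v w) = z \<bullet> (R *\<^sub>v (A *\<^sub>v w))"
      by (rule transpose_vec_mult_scalar[OF R Aw z])
    finally show ?thesis using RAw z by simp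
  qed
  have Tdec: "w \<bullet> (A *\<^sub>v w) \<le> v \<bullet> (A *\<^sub>v v)"
  proof -
    have vw: "v = w + P *\<^sub>v z0" using v Pz0 P unfolding w_def by (intro eq_vecI) auto
    have e: "(v - 1 \<cdot>\<^sub>v (P *\<^sub>v z0)) \<bullet> (A *\<^sub>v (v - 1 \<cdot>\<^sub>v (P *\<^sub>v z0))) =
      v \<bullet> (A *\<^sub>v v) - 2 * 1 * ((P *\<^sub>v z0) \<bullet> (A *\<^sub>v v)) + 1^2 * ((P *\<^sub>v z0) \<bullet> (A *\<^sub>v (P *\<^sub>v z0)))"
      by (rule quad_expand[OF A sym v Pz0])
    have "(P *\<^sub>v z0) \<bullet> (A *\<^sub>v v) = (P *\<^sub>v z0) \<bullet> (A *\<^sub>v w) + (P *\<^sub>v z0) \<bullet> (A *\<^sub>v (P *\<^sub>v z0))"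
      apply (subst vw) using A w Pz0 by (simp add: mult_add_distrib_mat_vec[of _ n n] scalar_prod_add_distrib[of _ n])
    then have "(P *\<^sub>v z0) \<bullet> (A *\<^sub>v v) = (P *\<^sub>v z0) \<bullet> (A *\<^sub>v (P *\<^sub>v z0))" using orth[OF z0] by simp
    moreover have "0 \<le> (P *\<^sub>v z0) \<bullet> (A *\<^sub>v (P *\<^sub>v z0))" using psd Pz0 by auto
    ultimately show ?thesis using e unfolding w_def by simp
  qed
  have appr: "d * (w \<bullet> (A *\<^sub>v w)) \<le> 4 * ((A *\<^sub>v w) \<bullet> (A *\<^sub>v w))"
  proof -
    obtain z where z: "z \<in> carrier_vec nc" and dz: "d * ((w - P *\<^sub>v z) \<bullet> (w - P *\<^sub>v z)) \<le> 4 * (w \<bullet> (A *\<^sub>v w))"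
      using approx w by blast
    define e where "e = w - P *\<^sub>v z"
    have Pz: "P *\<^sub>v z \<in> carrier_vec n" using P z by auto
    have ec: "e \<in> carrier_vec n" unfolding e_def using w Pz by auto
    define Q where "Q = w \<bullet> (A *\<^sub>v w)"
    have Qe: "Q = (A *\<^sub>v w) \<bullet> e"
    proof -
      have "(A *\<^sub>v w) \<bullet> e = (A *\<^sub>v w) \<bullet> w - (A *\<^sub>v w) \<bullet> (P *\<^sub>v z)"
        unfolding e_def using Aw w Pz by (simp add: scalar_prod_minus_distrib[of _ n])
      also have "(A *\<^sub>v w) \<bullet> (P *\<^sub>v z) = 0" using orth[OF z] comm_scalar_prod[OF Aw Pz] by simp
      finally show ?thesis unfolding Q_def using comm_scalar_prod[OF Aw w] by simp
    qed
    define t where "t = 4 / d"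
    have "0 \<le> (t \<cdot>\<^sub>v (A *\<^sub>v w) - e) \<bullet> (t \<cdot>\<^sub>v (A *\<^sub>v w) - e)" by (rule sp_self_nonneg)
    also have "\<dots> = t * t * ((A *\<^sub>v w) \<bullet> (A *\<^sub>v w)) - 2 * t * ((A *\<^sub>v w) \<bullet> e) + e \<bullet> e"
      using Aw ec by (simp add: minus_scalar_prod_distrib[of _ n] scalar_prod_minus_distrib[of _ n]
          comm_scalar_prod[of e n "A *\<^sub>v w"] algebra_simps)
    finally have 1: "0 \<le> t * t * ((A *\<^sub>v w) \<bullet> (A *\<^sub>v w)) - 2 * t * Q + e \<bullet> e" unfolding Qe .
    have 2: "e \<bullet> e \<le> t * Q" using dz d unfolding e_def t_def Q_def by (simp add: field_simps)
    from 1 2 have "t * Q \<le> t * t * ((A *\<^sub>v w) \<bullet> (A *\<^sub>v w))" by linarith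
    then have "t * Q \<le> t * (t * ((A *\<^sub>v w) \<bullet> (A *\<^sub>v w)))" by (simp add: mult.assoc)
    moreover have "0 < t" using d unfolding t_def by simp
    ultimately have "Q \<le> t * ((A *\<^sub>v w) \<bullet> (A *\<^sub>v w))" by (rule mult_left_le_imp_le)
    then show ?thesis unfolding Q_def t_def using d by (simp add: field_simps)
  qed
  have sm: "((1\<^sub>m n - (\<omega>/d) \<cdot>\<^sub>m A) *\<^sub>v w) \<bullet> (A *\<^sub>v ((1\<^sub>m n - (\<omega>/d) \<cdot>\<^sub>m A) *\<^sub>v w))
     \<le> w \<bullet> (A *\<^sub>v w) - \<eta> / d * ((A *\<^sub>v w) \<bullet> (A *\<^sub>v w))"
    by (rule smoothing_abs[OF A sym ray d om eta w])
  have "\<eta> / 4 * (w \<bullet> (A *\<^sub>v w)) \<le> \<eta> / d * ((A *\<^sub>v w) \<bullet> (A *\<^sub>v w))"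
  proof -
    have "\<eta> * (d * (w \<bullet> (A *\<^sub>v w))) \<le> \<eta> * (4 * ((A *\<^sub>v w) \<bullet> (A *\<^sub>v w)))"
      by (rule mult_left_mono[OF appr eta0])
    then show ?thesis using d by (simp add: field_simps)
  qed
  then have "((1\<^sub>m n - (\<omega>/d) \<cdot>\<^sub>m A) *\<^sub>v w) \<bullet> (A *\<^sub>v ((1\<^sub>m n - (\<omega>/d) \<cdot>\<^sub>m A) *\<^sub>v w))
     \<le> w \<bullet> (A *\<^sub>v w) - \<eta> / 4 * (w \<bullet> (A *\<^sub>v w))" using sm by linarith
  also have "\<dots> = (1 - \<eta>/4) * (w \<bullet> (A *\<^sub>v w))" by (simp add: algebra_simps)
  also have "\<dots> \<le> (1 - \<eta>/4) * (v \<bullet> (A *\<^sub>v v))"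
    by (rule mult_left_mono[OF Tdec], use eta4 in simp)
  finally have fin: "((1\<^sub>m n - (\<omega>/d) \<cdot>\<^sub>m A) *\<^sub>v ((1\<^sub>m n - P * G * R * A) *\<^sub>v v)) \<bullet> (A *\<^sub>v ((1\<^sub>m n - (\<omega>/d) \<cdot>\<^sub>m A) *\<^sub>v ((1\<^sub>m n - P * G * R * A) *\<^sub>v v)))
     \<le> (1 - \<eta>/4) * (v \<bullet> (A *\<^sub>v v))" unfolding Tv .
  have c1: "1\<^sub>m n - (\<omega>/d) \<cdot>\<^sub>m A \<in> carrier_mat n n" using A by auto
  have c2: "1\<^sub>m n - P * G * R * A \<in> carrier_mat n n" using A P G R by auto
  show ?thesis unfolding assoc_mult_mat_vec[OF c1 c2 v] by (rule fin)
qed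

lemma sp_self_zero:
  fixes y :: "real vec"
  assumes y: "y \<in> carrier_vec n" and z: "y \<bullet> y = 0"
  shows "y = 0\<^sub>v n"
proof -
  have "(\<Sum>i\<in>{0..<n}. y $ i * y $ i) = 0" using z y unfolding scalar_prod_def by simp
  then have "\<forall>i\<in>{0..<n}. y $ i * y $ i = 0"
    by (subst (asm) sum_nonneg_eq_0_iff) auto
  then show ?thesis using y by (intro eq_vecI) auto
qed

lemma compact_box:
  "compact (PiE UNIV (\<lambda>i::nat. if i < n then {-1..1::real} else {0}))"
proof -
  have "compactin (product_topology (\<lambda>i. euclidean) UNIV)
          (PiE UNIV (\<lambda>i::nat. if i < n then {-1..1::real} else {0}))"
    by (subst compactin_PiE) auto
  then show ?thesis unfolding euclidean_product_topology by simp
qed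

lemma quad_cont:
  "continuous_on UNIV (\<lambda>f::nat \<Rightarrow> real. \<Sum>i<n. \<Sum>j<n. f i * (c i j * f j))"
  by (intro continuous_intros continuous_on_product_coordinates)

lemma sq_cont:
  "continuous_on UNIV (\<lambda>f::nat \<Rightarrow> real. \<Sum>i<n. f i * f i)"
  by (intro continuous_intros continuous_on_product_coordinates)

lemma qf_eq:
  fixes M :: "real mat"
  assumes M: "M \<in> carrier_mat n n"
  shows "vec n f \<bullet> (M *\<^sub>v vec n f) = (\<Sum>i<n. \<Sum>j<n. f i * (M $$ (i,j) * f j))"
  using M by (simp add: scalar_prod_def mult_mat_vec_def row_def sum_distrib_left atLeast0LessThan)

lemma sq_eq:
  shows "vec n f \<bullet> vec n f = (\<Sum>i<n. f i * f i)"
  by (simp add: scalar_prod_def atLeast0LessThan)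

lemma rayleigh_eig:
  fixes M :: "real mat"
  assumes M: "M \<in> carrier_mat n n" and sym: "transpose_mat M = M" and n: "n > 0"
  shows "\<exists>lam. eigenvalue M lam \<and> (\<forall>u\<in>carrier_vec n. u \<bullet> (M *\<^sub>v u) \<le> lam * (u \<bullet> u))"
proof -
  define Q where "Q = (\<lambda>f::nat \<Rightarrow> real. \<Sum>i<n. \<Sum>j<n. f i * (M $$ (i,j) * f j))"
  define S where "S = PiE UNIV (\<lambda>i::nat. if i < n then {-1..1::real} else {0}) \<inter> {f. (\<Sum>i<n. f i * f i) = 1}"
  have cS: "compact S" unfolding S_def
    by (intro compact_Int_closed compact_box closed_Collect_eq sq_cont continuous_on_const)
  have neS: "S \<noteq> {}"
  proof -
    have "(\<lambda>i. if i = 0 then 1 else 0) \<in> S" using n unfolding S_def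
      by (auto simp: PiE_iff if_distrib sum.delta cong: if_cong)
    then show ?thesis by blast
  qed
  have cQ: "continuous_on S Q" unfolding Q_def
    by (rule continuous_on_subset[OF quad_cont], simp)
  obtain f0 where f0: "f0 \<in> S" and mx: "\<And>f. f \<in> S \<Longrightarrow> Q f \<le> Q f0"
    using continuous_attains_sup[OF cS neS cQ] by blast
  define lam where "lam = Q f0"
  define x where "x = vec n f0"
  have x: "x \<in> carrier_vec n" unfolding x_def by simp
  have xx: "x \<bullet> x = 1" using f0 unfolding x_def S_def by (simp add: sq_eq)
  have xMx: "x \<bullet> (M *\<^sub>v x) = lam" unfolding x_def lam_def Q_def by (rule qf_eq[OF M])
  have hom: "u \<bullet> (M *\<^sub>v u) \<le> lam * (u \<bullet> u)" if u: "u \<in> carrier_vec n" for u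
  proof (cases "u \<bullet> u = 0")
    case True
    then have "u = 0\<^sub>v n" using sp_self_zero u by blast
    then show ?thesis using M by simp
  next
    case False
    have pos: "u \<bullet> u > 0" using False sp_self_nonneg[of u] by linarith
    define s where "s = sqrt (u \<bullet> u)"
    have s: "s > 0" unfolding s_def using pos by simp
    have ss: "s * s = u \<bullet> u" unfolding s_def using pos by simp
    define f where "f = (\<lambda>i. if i < n then u $ i / s else 0)"
    have vf: "vec n f = (1/s) \<cdot>\<^sub>v u" using u unfolding f_def by (intro eq_vecI) auto
    have fS: "f \<in> S"
    proof -
      have "-1 \<le> u $ i / s \<and> u $ i / s \<le> 1" if i: "i < n" for i
      proof -
        have "u $ i * u $ i \<le> (\<Sum>k\<in>{0..<n}. u $ k * u $ k)"
          by (rule member_le_sum[of i "{0..<n}" "\<lambda>k. u $ k * u $ k"]) (use i in auto)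
        also have "\<dots> = s * s" using ss u by (simp add: scalar_prod_def)
        finally have "sqrt (u $ i * u $ i) \<le> sqrt (s * s)" by (rule real_sqrt_le_mono)
        then have "\<bar>u $ i\<bar> \<le> \<bar>s\<bar>" by (simp only: real_sqrt_abs2)
        then have "\<bar>u $ i\<bar> \<le> s" using s by linarith
        then have "\<bar>u $ i\<bar> / s \<le> 1" using divide_le_eq_1_pos[OF s] by blast
        moreover have "\<bar>u $ i / s\<bar> = \<bar>u $ i\<bar> / s" by (simp only: abs_divide abs_of_pos[OF s])
        ultimately have "\<bar>u $ i / s\<bar> \<le> 1" by linarith
        then show ?thesis unfolding abs_le_iff by linarith
      qed
      then have box: "f \<in> PiE UNIV (\<lambda>i::nat. if i < n then {-1..1::real} else {0})"
        unfolding f_def by (auto simp: PiE_iff)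
      have "(\<Sum>i<n. f i * f i) = vec n f \<bullet> vec n f" by (simp add: sq_eq)
      also have "\<dots> = (1/s) * (1/s) * (u \<bullet> u)" unfolding vf using u by simp
      also have "\<dots> = 1" unfolding ss[symmetric] using s by simp
      finally show ?thesis using box unfolding S_def by blast
    qed
    have "Q f = vec n f \<bullet> (M *\<^sub>v vec n f)" unfolding Q_def by (rule qf_eq[OF M, symmetric])
    also have "\<dots> = (1/s) * (1/s) * (u \<bullet> (M *\<^sub>v u))"
    proof -
      have Mu: "M *\<^sub>v u \<in> carrier_vec n" using M u by auto
      have "vec n f \<bullet> (M *\<^sub>v vec n f) = ((1/s) \<cdot>\<^sub>v u) \<bullet> ((1/s) \<cdot>\<^sub>v (M *\<^sub>v u))"
        unfolding vf mult_mat_vec[OF M u] ..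
      also have "\<dots> = (1/s) * (u \<bullet> ((1/s) \<cdot>\<^sub>v (M *\<^sub>v u)))"
        by (rule smult_scalar_prod_distrib[OF u]) (use Mu in auto)
      also have "u \<bullet> ((1/s) \<cdot>\<^sub>v (M *\<^sub>v u)) = (1/s) * (u \<bullet> (M *\<^sub>v u))"
        by (rule scalar_prod_smult_distrib[OF u Mu])
      finally show ?thesis by (simp only: mult.assoc)
    qed
    finally have le: "(1/s) * (1/s) * (u \<bullet> (M *\<^sub>v u)) \<le> lam" using mx[OF fS] unfolding lam_def by linarith
    have "u \<bullet> (M *\<^sub>v u) = (s * s) * ((1/s) * (1/s) * (u \<bullet> (M *\<^sub>v u)))"
      using s by (simp add: field_simps)
    also have "\<dots> \<le> (s * s) * lam" by (rule mult_left_mono[OF le]) simp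
    finally show ?thesis unfolding ss by (simp only: mult.commute)
  qed
  define y where "y = M *\<^sub>v x - lam \<cdot>\<^sub>v x"
  have y: "y \<in> carrier_vec n" unfolding y_def using M x by auto
  have Mx: "M *\<^sub>v x \<in> carrier_vec n" using M x by auto
  have a_eq: "y \<bullet> (M *\<^sub>v x) - lam * (y \<bullet> x) = y \<bullet> y"
  proof -
    have lx: "lam \<cdot>\<^sub>v x \<in> carrier_vec n" using x by simp
    have "y \<bullet> y = y \<bullet> (M *\<^sub>v x) - y \<bullet> (lam \<cdot>\<^sub>v x)"
      unfolding y_def[symmetric] by (subst (2) y_def) (rule scalar_prod_minus_distrib[OF y Mx lx])
    also have "y \<bullet> (lam \<cdot>\<^sub>v x) = lam * (y \<bullet> x)" by (rule scalar_prod_smult_distrib[OF y x])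
    finally show ?thesis by simp
  qed
  define a where "a = y \<bullet> y"
  define C where "C = y \<bullet> (M *\<^sub>v y) - lam * (y \<bullet> y)"
  have C: "C \<le> 0" using hom[OF y] unfolding C_def by simp
  have key: "2 * t * a + t^2 * C \<le> 0" for t
  proof -
    have h1: "(x - (-t) \<cdot>\<^sub>v y) \<bullet> (M *\<^sub>v (x - (-t) \<cdot>\<^sub>v y)) = x \<bullet> (M *\<^sub>v x) - 2 * (-t) * (y \<bullet> (M *\<^sub>v x)) + (-t)^2 * (y \<bullet> (M *\<^sub>v y))"
      by (rule quad_expand[OF M sym x y])
    have h2: "(x - (-t) \<cdot>\<^sub>v y) \<bullet> (1\<^sub>m n *\<^sub>v (x - (-t) \<cdot>\<^sub>v y)) = x \<bullet> (1\<^sub>m n *\<^sub>v x) - 2 * (-t) * (y \<bullet> (1\<^sub>m n *\<^sub>v x)) + (-t)^2 * (y \<bullet> (1\<^sub>m n *\<^sub>v y))"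
      by (rule quad_expand[OF one_carrier_mat transpose_one x y])
    have xy: "x - (-t) \<cdot>\<^sub>v y \<in> carrier_vec n" using x y by auto
    have h2': "(x - (-t) \<cdot>\<^sub>v y) \<bullet> (x - (-t) \<cdot>\<^sub>v y) = 1 + 2 * t * (y \<bullet> x) + t^2 * (y \<bullet> y)"
      using h2 xy x y xx by simp
    have "x \<bullet> (M *\<^sub>v x) - 2 * (-t) * (y \<bullet> (M *\<^sub>v x)) + (-t)^2 * (y \<bullet> (M *\<^sub>v y))
        \<le> lam * (1 + 2 * t * (y \<bullet> x) + t^2 * (y \<bullet> y))"
      using hom[OF xy] unfolding h1 h2' .
    then have "lam + 2 * t * (y \<bullet> (M *\<^sub>v x)) + t^2 * (y \<bullet> (M *\<^sub>v y))
        \<le> lam + 2 * t * (lam * (y \<bullet> x)) + t^2 * (lam * (y \<bullet> y))"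
      unfolding xMx by (simp add: algebra_simps)
    then have "2 * t * (y \<bullet> (M *\<^sub>v x) - lam * (y \<bullet> x)) + t^2 * (y \<bullet> (M *\<^sub>v y) - lam * (y \<bullet> y)) \<le> 0"
      by (simp add: algebra_simps)
    then show ?thesis unfolding a_eq a_def C_def .
  qed
  have a0: "a = 0"
  proof (rule ccontr)
    assume "a \<noteq> 0"
    then have ap: "a > 0" using sp_self_nonneg[of y] unfolding a_def by linarith
    define t where "t = a / (1 - C)"
    have t: "t > 0" unfolding t_def using ap C by simp
    have "2 * t * a \<le> t * t * (- C)" using key[of t] unfolding power2_eq_square by linarith
    then have "t * (2 * a) \<le> t * (t * (- C))" by (simp add: algebra_simps)
    then have "2 * a \<le> t * (- C)" using t by (rule mult_left_le_imp_le)
    also have "t * (- C) = a * (- C) / (1 - C)" unfolding t_def by simp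
    also have "\<dots> < a"
    proof -
      have "a * (- C) < a * (1 - C)" using ap by (simp add: algebra_simps)
      then show ?thesis using C by (simp add: field_simps)
    qed
    finally show False using ap by simp
  qed
  have "y = 0\<^sub>v n" using sp_self_zero[OF y] a0 unfolding a_def by simp
  then have "M *\<^sub>v x = lam \<cdot>\<^sub>v x"
  proof -
    assume y0: "y = 0\<^sub>v n"
    show ?thesis
    proof (rule eq_vecI)
      fix i assume "i < dim_vec (lam \<cdot>\<^sub>v x)"
      then have i: "i < n" using x by simp
      have "y $ i = 0" using y0 i by simp
      then show "(M *\<^sub>v x) $ i = (lam \<cdot>\<^sub>v x) $ i" using i Mx x unfolding y_def by simp
    next
      show "dim_vec (M *\<^sub>v x) = dim_vec (lam \<cdot>\<^sub>v x)" using M x by simp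
    qed
  qed
  moreover have "x \<noteq> 0\<^sub>v n" using xx by auto
  ultimately have "eigenvalue M lam" unfolding eigenvalue_def eigenvector_def using x M by auto
  then show ?thesis using hom by blast
qed

lemma sum_even_odd:
  fixes g :: "nat \<Rightarrow> real"
  shows "(\<Sum>k<2*m. g k) = (\<Sum>i<m. g (2*i) + g (2*i+1))"
proof (induction m)
  case 0 then show ?case by simp
next
  case (Suc m)
  have "(\<Sum>k<2*Suc m. g k) = (\<Sum>k<2*m. g k) + g (2*m) + g (2*m+1)"
    by (simp add: numeral_eq_Suc)
  then show ?case using Suc by simp
qed

lemma sum_shift1:
  fixes h :: "nat \<Rightarrow> real"
  shows "(\<Sum>i<m. h (Suc i)) = (\<Sum>i<m. h i) - h 0 + h m"
  by (induction m) auto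

lemma form_cells:
  fixes x :: "nat \<Rightarrow> real"
  assumes x0: "x 0 = 0" and xm: "x (2*m) = 0"
  shows "(\<Sum>k<2*m. x k * (4 * x k + x (k-1) + x (k+1)))
       = (\<Sum>i<m. 2 * x (2*i)^2 + 2 * x (2*i+2)^2 + 4 * x (2*i+1)^2
                 + 2 * x (2*i) * x (2*i+1) + 2 * x (2*i+2) * x (2*i+1))"
    and "(\<Sum>k<2*m. x k) = (\<Sum>i<m. x (2*i+1) + (x (2*i) + x (2*i+2)) / 2)"
proof -
  have sh1: "(\<Sum>i<m. x (2*i+2)^2) = (\<Sum>i<m. x (2*i)^2)"
    using sum_shift1[of "\<lambda>i. x (2*i)^2" m] x0 xm by simp
  have sh2: "(\<Sum>i<m. x (2*i+2) * x (2*i+1)) = (\<Sum>i<m. x (2*i) * x (2*i-1))"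
    using sum_shift1[of "\<lambda>i. x (2*i) * x (2*i-1)" m] x0 xm by simp
  have sh3: "(\<Sum>i<m. x (2*i+2)) = (\<Sum>i<m. x (2*i))"
    using sum_shift1[of "\<lambda>i. x (2*i)" m] x0 xm by simp
  have "(\<Sum>k<2*m. x k * (4 * x k + x (k-1) + x (k+1)))
      = (\<Sum>i<m. x (2*i) * (4 * x (2*i) + x (2*i-1) + x (2*i+1))
               + x (2*i+1) * (4 * x (2*i+1) + x (2*i) + x (2*i+2)))"
    by (subst sum_even_odd) simp
  also have "\<dots> = 4 * (\<Sum>i<m. x (2*i)^2) + (\<Sum>i<m. x (2*i) * x (2*i-1))
      + (\<Sum>i<m. 4 * x (2*i+1)^2 + 2 * x (2*i) * x (2*i+1) + x (2*i+2) * x (2*i+1))"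
    by (simp add: sum.distrib sum_distrib_left power2_eq_square algebra_simps)
  also have "\<dots> = 2 * (\<Sum>i<m. x (2*i)^2) + 2 * (\<Sum>i<m. x (2*i+2)^2) + (\<Sum>i<m. x (2*i+2) * x (2*i+1))
      + (\<Sum>i<m. 4 * x (2*i+1)^2 + 2 * x (2*i) * x (2*i+1) + x (2*i+2) * x (2*i+1))"
    unfolding sh1 sh2 by simp
  also have "\<dots> = (\<Sum>i<m. 2 * x (2*i)^2 + 2 * x (2*i+2)^2 + 4 * x (2*i+1)^2
                 + 2 * x (2*i) * x (2*i+1) + 2 * x (2*i+2) * x (2*i+1))"
    by (simp add: sum.distrib sum_distrib_left algebra_simps)
  finally show "(\<Sum>k<2*m. x k * (4 * x k + x (k-1) + x (k+1)))
       = (\<Sum>i<m. 2 * x (2*i)^2 + 2 * x (2*i+2)^2 + 4 * x (2*i+1)^2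
                 + 2 * x (2*i) * x (2*i+1) + 2 * x (2*i+2) * x (2*i+1))" .
  have "(\<Sum>k<2*m. x k) = (\<Sum>i<m. x (2*i) + x (2*i+1))" by (rule sum_even_odd)
  also have "\<dots> = (\<Sum>i<m. x (2*i))/2 + (\<Sum>i<m. x (2*i+2))/2 + (\<Sum>i<m. x (2*i+1))"
    unfolding sh3 by (simp add: sum.distrib)
  also have "\<dots> = (\<Sum>i<m. x (2*i+1) + (x (2*i) + x (2*i+2)) / 2)"
    by (simp add: sum.distrib sum_divide_distrib add_divide_distrib)
  finally show "(\<Sum>k<2*m. x k) = (\<Sum>i<m. x (2*i+1) + (x (2*i) + x (2*i+2)) / 2)" .
qed

lemma Bmat_entry_split:
  "i < N - 1 \<Longrightarrow> j < N - 1 \<Longrightarrow> Bmat N $$ (i,j) =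
     real N / 6 * ((if j = i then 4 else 0) + (if i = j + 1 then 1 else 0) + (if j = i + 1 then 1 else 0)) - 1"
  unfolding Bmat_def by auto

lemma Bmat_carrier: "Bmat N \<in> carrier_mat (N-1) (N-1)"
  unfolding Bmat_def by simp

lemma Bmat_sym: "transpose_mat (Bmat N) = Bmat N"
  unfolding Bmat_def by (rule eq_matI) auto

lemma Bmat_mult_entry:
  fixes v :: "real vec"
  assumes v: "v \<in> carrier_vec (N-1)" and i: "i < N - 1"
    and x_def: "x = (\<lambda>k. if 1 \<le> k \<and> k < N then v $ (k-1) else 0)"
  shows "(Bmat N *\<^sub>v v) $ i = real N / 6 * (4 * x (i+1) + x i + x (i+2)) - (\<Sum>k<N. x k)"
proof -
  let ?n = "N - 1"
  have "(Bmat N *\<^sub>v v) $ i = (\<Sum>j<?n. Bmat N $$ (i,j) * v $ j)"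
    using v i Bmat_carrier[of N] by (simp add: mult_mat_vec_def scalar_prod_def row_def atLeast0LessThan)
  also have "\<dots> = (\<Sum>j<?n. real N / 6 * ((if j = i then 4 * v $ j else 0) + (if i = j + 1 then v $ j else 0)
        + (if j = i + 1 then v $ j else 0)) - v $ j)"
    by (rule sum.cong) (use i in \<open>auto simp: Bmat_entry_split algebra_simps\<close>)
  also have "\<dots> = real N / 6 * ((\<Sum>j<?n. if j = i then 4 * v $ j else 0) + (\<Sum>j<?n. if i = j + 1 then v $ j else 0)
        + (\<Sum>j<?n. if j = i + 1 then v $ j else 0)) - (\<Sum>j<?n. v $ j)"
    by (simp only: sum.distrib sum_subtractf sum_distrib_left distrib_left)
  also have "(\<Sum>j<?n. if j = i then 4 * v $ j else 0) = 4 * x (i+1)"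
    using i unfolding x_def by simp
  also have "(\<Sum>j<?n. if i = j + 1 then v $ j else 0) = x i"
  proof (cases i)
    case 0 then show ?thesis unfolding x_def by simp
  next
    case (Suc i')
    have "(\<Sum>j<?n. if i = j + 1 then v $ j else 0) = (\<Sum>j<?n. if j = i' then v $ j else 0)"
      by (rule sum.cong) (auto simp: Suc)
    also have "\<dots> = v $ i'" using i Suc by simp
    finally show ?thesis unfolding x_def using Suc i by simp
  qed
  also have "(\<Sum>j<?n. if j = i + 1 then v $ j else 0) = x (i+2)"
    unfolding x_def by auto
  also have "(\<Sum>j<?n. v $ j) = (\<Sum>k<N. x k)"
  proof -
    have N: "N \<ge> 1" using i by simp
    have "(\<Sum>k<N. x k) = (\<Sum>k<Suc ?n. x k)" using N by simp
    also have "\<dots> = x 0 + (\<Sum>j<?n. x (Suc j))" by (rule sum.lessThan_Suc_shift)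
    also have "\<dots> = (\<Sum>j<?n. v $ j)" unfolding x_def by (auto intro!: sum.cong)
    finally show ?thesis by simp
  qed
  finally show ?thesis .
qed

lemma Bmat_quad:
  fixes v :: "real vec"
  assumes v: "v \<in> carrier_vec (N-1)" and N: "N \<ge> 1"
    and x_def: "x = (\<lambda>k. if 1 \<le> k \<and> k < N then v $ (k-1) else 0)"
  shows "v \<bullet> (Bmat N *\<^sub>v v) = real N / 6 * (\<Sum>k<N. x k * (4 * x k + x (k-1) + x (k+1))) - (\<Sum>k<N. x k)^2"
proof -
  let ?n = "N - 1"
  let ?S = "\<Sum>k<N. x k"
  have "v \<bullet> (Bmat N *\<^sub>v v) = (\<Sum>i<?n. v $ i * (Bmat N *\<^sub>v v) $ i)"
    using v Bmat_carrier[of N] by (simp add: scalar_prod_def atLeast0LessThan)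
  also have "\<dots> = (\<Sum>i<?n. x (Suc i) * (real N / 6 * (4 * x (Suc i) + x (Suc i - 1) + x (Suc i + 1)) - ?S))"
    by (rule sum.cong) (auto simp: Bmat_mult_entry[OF v _ x_def] x_def)
  also have "\<dots> = (\<Sum>k<Suc ?n. x k * (real N / 6 * (4 * x k + x (k - 1) + x (k + 1)) - ?S))"
    by (subst sum.lessThan_Suc_shift) (simp add: x_def)
  also have "Suc ?n = N" using N by simp
  also have "(\<Sum>k<N. x k * (real N / 6 * (4 * x k + x (k - 1) + x (k + 1)) - ?S))
      = real N / 6 * (\<Sum>k<N. x k * (4 * x k + x (k-1) + x (k+1))) - ?S * ?S"
    by (simp add: sum_subtractf sum_distrib_left sum_distrib_right algebra_simps)
  finally show ?thesis by (simp add: power2_eq_square)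
qed

lemma cs_sum:
  fixes u :: "nat \<Rightarrow> real"
  shows "(\<Sum>i<m. u i)^2 \<le> real m * (\<Sum>i<m. (u i)^2)"
proof -
  have "0 \<le> (\<Sum>i<m. \<Sum>j<m. (u i - u j)^2)" by (intro sum_nonneg) auto
  also have "(\<Sum>i<m. \<Sum>j<m. (u i - u j)^2) = (\<Sum>i<m. \<Sum>j<m. (u i)^2 + (u j)^2 - 2 * (u i * u j))"
    by (intro sum.cong refl) (simp add: power2_diff)
  also have "\<dots> = 2 * (real m * (\<Sum>i<m. (u i)^2)) - 2 * (\<Sum>i<m. u i)^2"
    by (simp add: sum.distrib sum_subtractf sum_distrib_left sum_distrib_right power2_eq_square
        sum.swap[of "\<lambda>i j. u j * u j"] algebra_simps)
  finally show ?thesis by simp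
qed

lemma cell_ineq:
  fixes a b c :: "nat \<Rightarrow> real"
  shows "real (2*m) / 6 * (\<Sum>i<m. 2 * (a i)^2 + 2 * (b i)^2 + 4 * (c i)^2 + 2 * a i * c i + 2 * b i * c i)
          - (\<Sum>i<m. c i + (a i + b i) / 2)^2
       \<ge> real m / 3 * (\<Sum>i<m. (c i - (a i + b i) / 2)^2 + 4 * ((b i - a i) / 2)^2)"
proof -
  define u where "u i = c i / 2 + (a i + b i) / 4" for i
  have S: "(\<Sum>i<m. c i + (a i + b i) / 2) = 2 * (\<Sum>i<m. u i)"
    unfolding u_def sum_distrib_left by (intro sum.cong refl) (simp add: field_simps)
  have cell: "(2 * (a i)^2 + 2 * (b i)^2 + 4 * (c i)^2 + 2 * a i * c i + 2 * b i * c i)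
      = 12 * (u i)^2 + ((c i - (a i + b i) / 2)^2 + 4 * ((b i - a i) / 2)^2)" for i
    unfolding u_def by (simp add: power2_eq_square field_simps)
  have "real (2*m) / 6 * (\<Sum>i<m. 2 * (a i)^2 + 2 * (b i)^2 + 4 * (c i)^2 + 2 * a i * c i + 2 * b i * c i)
      = 4 * (real m * (\<Sum>i<m. (u i)^2)) + real m / 3 * (\<Sum>i<m. (c i - (a i + b i) / 2)^2 + 4 * ((b i - a i) / 2)^2)"
    unfolding cell by (simp add: sum.distrib sum_distrib_left algebra_simps)
  moreover have "(\<Sum>i<m. c i + (a i + b i) / 2)^2 = 4 * (\<Sum>i<m. u i)^2"
    unfolding S by (simp add: power2_eq_square)
  moreover note cs_sum[of u m]
  ultimately show ?thesis by linarith
qed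

lemma restr_carrier: "restr q \<in> carrier_mat (2^q div 2 - 1) (2^q - 1)"
  unfolding restr_def by simp

lemma RT_entry:
  fixes z :: "real vec"
  assumes Nm: "2^q = 2*m" and z: "z \<in> carrier_vec (m - 1)" and k: "k < 2*m - 1"
  shows "(transpose_mat (restr q) *\<^sub>v z) $ k =
     (if even k then ((if k div 2 < m - 1 then z $ (k div 2) else 0) + (if k \<ge> 2 then z $ (k div 2 - 1) else 0)) / 4
      else z $ (k div 2) / 2)"
proof -
  let ?nc = "m - 1"
  have dimR: "dim_row (restr q) = ?nc" "dim_col (restr q) = 2*m - 1" using Nm unfolding restr_def by auto
  have "(transpose_mat (restr q) *\<^sub>v z) $ k = (\<Sum>i<?nc. restr q $$ (i,k) * z $ i)"
    using z k dimR by (simp add: mult_mat_vec_def scalar_prod_def atLeast0LessThan)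
  also have "\<dots> = (\<Sum>i<?nc. (if i = k div 2 \<and> even k then z $ i / 4 else 0)
       + (if i + 1 = k div 2 \<and> even k then z $ i / 4 else 0)
       + (if i = k div 2 \<and> odd k then z $ i / 2 else 0))"
  proof (rule sum.cong[OF refl])
    fix i assume i: "i \<in> {..<?nc}"
    have e: "restr q $$ (i,k) = (if k = 2*i \<or> k = 2*i + 2 then 1/4 else if k = 2*i+1 then 1/2 else 0)"
      using i k Nm unfolding restr_def by simp
    show "restr q $$ (i,k) * z $ i = (if i = k div 2 \<and> even k then z $ i / 4 else 0)
       + (if i + 1 = k div 2 \<and> even k then z $ i / 4 else 0)
       + (if i = k div 2 \<and> odd k then z $ i / 2 else 0)"
      unfolding e by (auto elim!: evenE oddE; presburger)
  qed
  also have "\<dots> = (\<Sum>i<?nc. if i = k div 2 \<and> even k then z $ i / 4 else 0)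
       + (\<Sum>i<?nc. if i + 1 = k div 2 \<and> even k then z $ i / 4 else 0)
       + (\<Sum>i<?nc. if i = k div 2 \<and> odd k then z $ i / 2 else 0)"
    by (simp only: sum.distrib)
  also have "(\<Sum>i<?nc. if i = k div 2 \<and> even k then z $ i / 4 else 0)
      = (if even k then (if k div 2 < m - 1 then z $ (k div 2) else 0) / 4 else 0)"
    by (cases "even k") auto
  also have "(\<Sum>i<?nc. if i + 1 = k div 2 \<and> even k then z $ i / 4 else 0)
      = (if even k then (if k \<ge> 2 then z $ (k div 2 - 1) else 0) / 4 else 0)"
  proof (cases "even k \<and> k \<ge> 2")
    case True
    have "(\<Sum>i<?nc. if i + 1 = k div 2 \<and> even k then z $ i / 4 else 0)
        = (\<Sum>i<?nc. if i = k div 2 - 1 then z $ i / 4 else 0)"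
      by (rule sum.cong) (use True in auto)
    also have "\<dots> = z $ (k div 2 - 1) / 4" using True k by auto
    finally show ?thesis using True by simp
  next
    case False
    then have "\<And>i. \<not> (i + 1 = k div 2 \<and> even k)" by auto
    then show ?thesis using False by auto
  qed
  also have "(\<Sum>i<?nc. if i = k div 2 \<and> odd k then z $ i / 2 else 0)
      = (if odd k then z $ (k div 2) / 2 else 0)"
    using k by (cases "odd k") (auto elim!: oddE)
  finally show ?thesis by auto
qed

definition xof :: "nat \<Rightarrow> real vec \<Rightarrow> nat \<Rightarrow> real" where
  "xof N v = (\<lambda>k. if 1 \<le> k \<and> k < N then v $ (k-1) else 0)"

definition rr :: "(nat \<Rightarrow> real) \<Rightarrow> nat \<Rightarrow> real" where
  "rr x i = x (2*i+1) - (x (2*i) + x (2*i+2)) / 2"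

definition tt :: "(nat \<Rightarrow> real) \<Rightarrow> nat \<Rightarrow> real" where
  "tt x i = (x (2*i+2) - x (2*i)) / 2"

lemma B_lower:
  fixes v :: "real vec"
  assumes Nm: "N = 2*m" and m: "m \<ge> 1" and v: "v \<in> carrier_vec (N-1)"
  shows "v \<bullet> (Bmat N *\<^sub>v v) \<ge> real m / 3 * (\<Sum>i<m. (rr (xof N v) i)^2 + 4 * (tt (xof N v) i)^2)"
proof -
  define x where "x = xof N v"
  have xd: "x = (\<lambda>k. if 1 \<le> k \<and> k < N then v $ (k-1) else 0)" unfolding x_def xof_def ..
  have x0: "x 0 = 0" and xm: "x (2*m) = 0" unfolding xd Nm by auto
  have "v \<bullet> (Bmat N *\<^sub>v v) = real N / 6 * (\<Sum>k<N. x k * (4 * x k + x (k-1) + x (k+1))) - (\<Sum>k<N. x k)^2"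
    by (rule Bmat_quad[OF v _ xd]) (use Nm m in simp)
  also have "\<dots> = real (2*m) / 6 * (\<Sum>i<m. 2 * x (2*i)^2 + 2 * x (2*i+2)^2 + 4 * x (2*i+1)^2
                 + 2 * x (2*i) * x (2*i+1) + 2 * x (2*i+2) * x (2*i+1))
        - (\<Sum>i<m. x (2*i+1) + (x (2*i) + x (2*i+2)) / 2)^2"
    unfolding Nm form_cells[OF x0 xm] ..
  also have "\<dots> \<ge> real m / 3 * (\<Sum>i<m. (x (2*i+1) - (x (2*i) + x (2*i+2)) / 2)^2 + 4 * ((x (2*i+2) - x (2*i)) / 2)^2)"
    using cell_ineq[where m=m and a="\<lambda>i. x (2*i)" and b="\<lambda>i. x (2*i+2)" and c="\<lambda>i. x (2*i+1)"] by simp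
  finally show ?thesis unfolding rr_def tt_def x_def .
qed

lemma B_psd:
  fixes v :: "real vec"
  assumes Nm: "N = 2*m" and m: "m \<ge> 1" and v: "v \<in> carrier_vec (N-1)"
  shows "v \<bullet> (Bmat N *\<^sub>v v) \<ge> 0"
proof -
  have "0 \<le> real m / 3 * (\<Sum>i<m. (rr (xof N v) i)^2 + 4 * (tt (xof N v) i)^2)"
    by (intro mult_nonneg_nonneg sum_nonneg) auto
  then show ?thesis using B_lower[OF Nm m v] by linarith
qed

lemma B_pd:
  fixes v :: "real vec"
  assumes Nm: "N = 2*m" and m: "m \<ge> 1" and v: "v \<in> carrier_vec (N-1)" and nz: "v \<noteq> 0\<^sub>v (N-1)"
  shows "v \<bullet> (Bmat N *\<^sub>v v) > 0"
proof (rule ccontr)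
  assume "\<not> ?thesis"
  then have le: "v \<bullet> (Bmat N *\<^sub>v v) \<le> 0" by simp
  define x where "x = xof N v"
  have xd: "x = (\<lambda>k. if 1 \<le> k \<and> k < N then v $ (k-1) else 0)" unfolding x_def xof_def ..
  have s0: "(\<Sum>i<m. (rr x i)^2 + 4 * (tt x i)^2) \<ge> 0" by (intro sum_nonneg) auto
  have "real m / 3 * (\<Sum>i<m. (rr x i)^2 + 4 * (tt x i)^2) \<le> 0"
    using B_lower[OF Nm m v] le unfolding x_def by linarith
  then have "(\<Sum>i<m. (rr x i)^2 + 4 * (tt x i)^2) \<le> 0" using m
    by (simp add: mult_le_0_iff)
  then have "(\<Sum>i<m. (rr x i)^2 + 4 * (tt x i)^2) = 0" using s0 by linarith
  then have all0: "\<forall>i\<in>{..<m}. (rr x i)^2 + 4 * (tt x i)^2 = 0"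
    by (subst (asm) sum_nonneg_eq_0_iff) (auto intro: add_nonneg_nonneg)
  have r0: "rr x i = 0" and t0: "tt x i = 0" if "i < m" for i
  proof -
    have "(rr x i)^2 + 4 * (tt x i)^2 = 0" using all0 that by auto
    moreover have "(rr x i)^2 \<ge> 0" "(tt x i)^2 \<ge> 0" by auto
    ultimately have "(rr x i)^2 = 0" "(tt x i)^2 = 0" by linarith+
    then show "rr x i = 0" "tt x i = 0" by auto
  qed
  have ev: "x (2*i) = 0" if "i \<le> m" for i
    using that
  proof (induction i)
    case 0 then show ?case unfolding xd by simp
  next
    case (Suc i)
    then have "tt x i = 0" using t0 by simp
    then have "x (2*i+2) = x (2*i)" unfolding tt_def by simp
    then show ?case using Suc by simp
  qed
  have od: "x (2*i+1) = 0" if "i < m" for i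
    using r0[OF that] ev[of i] ev[of "Suc i"] that unfolding rr_def by simp
  have "v = 0\<^sub>v (N-1)"
  proof (rule eq_vecI)
    fix j assume "j < dim_vec (0\<^sub>v (N-1) :: real vec)"
    then have j: "j < N - 1" by simp
    have "x (j+1) = v $ j" unfolding xd using j by simp
    moreover have "x (j+1) = 0"
    proof (cases "even (j+1)")
      case True
      then have "\<exists>i. j + 1 = 2*i" by presburger
      then obtain i where "j + 1 = 2*i" by blast
      then show ?thesis using ev[of i] j Nm by simp
    next
      case False
      then have "\<exists>i. j + 1 = 2*i+1" by presburger
      then obtain i where "j + 1 = 2*i+1" by blast
      then show ?thesis using od[of i] j Nm by simp
    qed
    ultimately show "v $ j = 0\<^sub>v (N-1) $ j" using j by simp
  qed (use v in simp)
  then show False using nz by simp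
qed

lemma P_entry:
  fixes w :: "real vec"
  assumes Nm: "2^q = 2*m" and m: "m \<ge> 1" and w: "w \<in> carrier_vec (2*m-1)"
    and zd: "z = vec (m-1) (\<lambda>i. w $ (2*i+1))" and k: "k < 2*m - 1"
  shows "(w - (2 \<cdot>\<^sub>m transpose_mat (restr q)) *\<^sub>v z) $ k = (if even k then rr (xof (2*m) w) (k div 2) else 0)"
proof -
  have z: "z \<in> carrier_vec (m-1)" unfolding zd by simp
  have RT: "transpose_mat (restr q) \<in> carrier_mat (2*m-1) (m-1)" using restr_carrier[of q] Nm by simp
  have Pz: "(2 \<cdot>\<^sub>m transpose_mat (restr q)) *\<^sub>v z = 2 \<cdot>\<^sub>v (transpose_mat (restr q) *\<^sub>v z)"
    by (rule smult_mat_vec[OF RT z])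
  have e: "(w - (2 \<cdot>\<^sub>m transpose_mat (restr q)) *\<^sub>v z) $ k = w $ k - 2 * (transpose_mat (restr q) *\<^sub>v z) $ k"
    unfolding Pz using k w RT by simp
  let ?x = "xof (2*m) w"
  show ?thesis
  proof (cases "even k")
    case True
    then obtain j where kj: "k = 2*j" by (auto elim: evenE)
    have j: "j < m" using k kj by simp
    have a: "(if k div 2 < m - 1 then z $ (k div 2) else 0) = ?x (2*j+2)"
      using kj j unfolding zd xof_def by auto
    have b: "(if k \<ge> 2 then z $ (k div 2 - 1) else 0) = ?x (2*j)"
    proof (cases "j = 0")
      case True then show ?thesis using kj unfolding xof_def by simp
    next
      case False
      then have "2*j - 1 = 2*(j-1) + 1" by simp
      then show ?thesis using kj j False unfolding zd xof_def by auto
    qed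
    have c: "w $ k = ?x (2*j+1)" using kj j unfolding xof_def by simp
    show ?thesis unfolding e RT_entry[OF Nm z k] using True a b c kj
      by (simp add: rr_def field_simps)
  next
    case False
    then obtain j where kj: "k = 2*j+1" by (auto elim: oddE)
    have "k div 2 < m - 1" using k kj by simp
    then show ?thesis unfolding e RT_entry[OF Nm z k] using False kj unfolding zd by simp
  qed
qed

lemma approx_B:
  fixes w :: "real vec"
  assumes Nm: "2^q = 2*m" and m: "m \<ge> 1" and w: "w \<in> carrier_vec (2*m-1)"
    and zd: "z = vec (m-1) (\<lambda>i. w $ (2*i+1))"
  shows "(w - (2 \<cdot>\<^sub>m transpose_mat (restr q)) *\<^sub>v z) \<bullet> (w - (2 \<cdot>\<^sub>m transpose_mat (restr q)) *\<^sub>v z)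
     = (\<Sum>i<m. (rr (xof (2*m) w) i)^2)"
proof -
  let ?d = "w - (2 \<cdot>\<^sub>m transpose_mat (restr q)) *\<^sub>v z"
  let ?e = "\<lambda>k. if even k then rr (xof (2*m) w) (k div 2) else 0"
  have z: "z \<in> carrier_vec (m-1)" unfolding zd by simp
  have RT: "transpose_mat (restr q) \<in> carrier_mat (2*m-1) (m-1)" using restr_carrier[of q] Nm by simp
  have dd: "dim_vec ?d = 2*m - 1" using w RT z by simp
  have "?d \<bullet> ?d = (\<Sum>k<2*m-1. ?d $ k * ?d $ k)" using dd by (simp add: scalar_prod_def atLeast0LessThan)
  also have "\<dots> = (\<Sum>k<2*m-1. (?e k)^2)"
    by (rule sum.cong[OF refl]) (simp add: P_entry[OF Nm m w zd] power2_eq_square)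
  also have "\<dots> = (\<Sum>k<2*m. (?e k)^2)"
  proof -
    have s: "Suc (2*m-1) = 2*m" using m by simp
    have "(\<Sum>k<Suc (2*m-1). (?e k)^2) = (\<Sum>k<2*m-1. (?e k)^2) + (?e (2*m-1))^2"
      by (rule sum.lessThan_Suc)
    then have "(\<Sum>k<2*m. (?e k)^2) = (\<Sum>k<2*m-1. (?e k)^2) + (?e (2*m-1))^2"
      by (simp only: s)
    moreover have "odd (2*m - 1)" using m by simp
    ultimately show ?thesis by simp
  qed
  also have "\<dots> = (\<Sum>i<m. (?e (2*i))^2 + (?e (2*i+1))^2)" by (rule sum_even_odd)
  also have "\<dots> = (\<Sum>i<m. (rr (xof (2*m) w) i)^2)" by simp
  finally show ?thesis .
qed

lemma Aq_eq: "Aq q b = (b / real (2^q))^2 \<cdot>\<^sub>m Bmat (2^q)"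
  by (simp add: Aq_def Let_def)

lemma diag_inv_smult_B:
  "diag_inv (diagpart (c \<cdot>\<^sub>m Bmat N)) = (1 / (c * (2 * real N / 3 - 1))) \<cdot>\<^sub>m 1\<^sub>m (N-1)"
  by (rule eq_matI) (auto simp: diag_inv_def diagpart_def Bmat_def)

lemma sp_smult_mat:
  fixes A :: "real mat"
  assumes A: "A \<in> carrier_mat n n" and v: "v \<in> carrier_vec n"
  shows "v \<bullet> ((c \<cdot>\<^sub>m A) *\<^sub>v v) = c * (v \<bullet> (A *\<^sub>v v))"
proof -
  have Av: "A *\<^sub>v v \<in> carrier_vec n" using A v by auto
  show ?thesis unfolding smult_mat_vec[OF A v] by (rule scalar_prod_smult_distrib[OF v Av])
qed

lemma minv_ok:
  fixes Ac :: "real mat"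
  assumes Ac: "Ac \<in> carrier_mat k k"
    and inj: "\<And>z. z \<in> carrier_vec k \<Longrightarrow> z \<noteq> 0\<^sub>v k \<Longrightarrow> Ac *\<^sub>v z \<noteq> 0\<^sub>v k"
  shows "minv Ac \<in> carrier_mat k k \<and> Ac * minv Ac = 1\<^sub>m k"
proof -
  have "det Ac \<noteq> 0" using det_0_iff_vec_prod_zero_field[OF Ac] inj by blast
  then have "Ac \<in> Units (ring_mat TYPE(real) k ())" by (rule det_non_zero_imp_unit[OF Ac])
  then obtain B where B: "B \<in> carrier_mat k k" "B * Ac = 1\<^sub>m k" "Ac * B = 1\<^sub>m k"
    unfolding Units_def ring_mat_def by auto
  have dr: "dim_row Ac = k" using Ac by simp
  have "\<exists>B. B \<in> carrier_mat (dim_row Ac) (dim_row Ac) \<and> Ac * B = 1\<^sub>m (dim_row Ac) \<and> B * Ac = 1\<^sub>m (dim_row Ac)"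
    using B dr by auto
  from someI_ex[OF this] show ?thesis unfolding minv_def dr by auto
qed

lemma eig_finite:
  fixes M :: "real mat"
  assumes M: "M \<in> carrier_mat n n"
  shows "finite {k. eigenvalue M k}"
proof -
  have "char_poly M \<noteq> 0" using degree_monic_char_poly[OF M] by auto
  then have "finite {k. poly (char_poly M) k = 0}" by (rule poly_roots_finite)
  moreover have "{k. eigenvalue M k} = {k. poly (char_poly M) k = 0}"
    using eigenvalue_root_char_poly[OF M] by auto
  ultimately show ?thesis by simp
qed

theorem theorem4p5:
  fixes q :: nat and b \<eta>0 \<omega> \<eta> :: real
  assumes "q \<ge> 2" and "b > 0"
    and "lambda_max (diag_inv (diagpart (Aq q b)) * Aq q b) \<le> \<eta>0" and "\<eta>0 < 3"
    and "0 < \<omega>" and "\<omega> < 2 / \<eta>0"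
    and "0 < \<eta>" and "\<eta> \<le> \<omega> * (2 - \<omega> * \<eta>0)"
  shows "(\<forall>v \<in> carrier_vec (2^q - 1).
            (vnormM (Aq q b) (Kq q b \<omega> *\<^sub>v v))^2
              \<le> (vnormM (Aq q b) v)^2
                 - \<eta> * (vnormM (diag_inv (diagpart (Aq q b))) (Aq q b *\<^sub>v v))^2)
       \<and> opnormM (Aq q b) (Kq q b \<omega> * Tq q b) \<le> sqrt (1 - \<eta> / 4)
       \<and> sqrt (1 - \<eta> / 4) < 1"
proof -
  note q2 = assms(1) and bpos = assms(2) and lmax = assms(3) and om = assms(5)
    and etapos = assms(7) and eta = assms(8)
  define m where "m = (2::nat)^(q-1)"
  have Nm: "(2::nat)^q = 2*m" unfolding m_def using q2 by (cases q) auto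
  have m2: "m \<ge> 2"
  proof -
    have "(2::nat)^1 \<le> 2^(q-1)" by (rule power_increasing) (use q2 in auto)
    then show ?thesis unfolding m_def by simp
  qed
  define n where "n = 2*m - 1"
  have n_eq: "(2::nat)^q - 1 = n" unfolding n_def Nm ..
  have nc_eq: "(2::nat)^q div 2 - 1 = m - 1" unfolding Nm by simp
  define c0 where "c0 = (b / real ((2::nat)^q))^2"
  have c0: "c0 > 0" unfolding c0_def using bpos by simp
  define A where "A = Aq q b"
  have A_eq: "A = c0 \<cdot>\<^sub>m Bmat (2^q)" unfolding A_def c0_def by (rule Aq_eq)
  have B: "Bmat (2^q) \<in> carrier_mat n n" using Bmat_carrier[of "2^q"] unfolding n_eq .
  have Acar: "A \<in> carrier_mat n n" unfolding A_eq using B by simp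
  have Asym: "transpose_mat A = A" unfolding A_eq by (rule eq_matI) (auto simp: Bmat_def)
  define dA where "dA = c0 * (2 * real ((2::nat)^q) / 3 - 1)"
  have N4: "real ((2::nat)^q) \<ge> 4" unfolding Nm using m2 by simp
  have dA: "dA > 0" unfolding dA_def using c0 N4 by simp
  have Dinv: "diag_inv (diagpart A) = (1/dA) \<cdot>\<^sub>m 1\<^sub>m n"
    unfolding A_eq dA_def diag_inv_smult_B n_eq ..
  have M_eq: "diag_inv (diagpart A) * A = (1/dA) \<cdot>\<^sub>m A"
    unfolding Dinv mult_smult_assoc_mat[OF one_carrier_mat Acar] left_mult_one_mat[OF Acar] ..
  have K_eq: "Kq q b \<omega> = 1\<^sub>m n - (\<omega>/dA) \<cdot>\<^sub>m A"
  proof -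
    have "\<omega> \<cdot>\<^sub>m ((1/dA) \<cdot>\<^sub>m A) = (\<omega>/dA) \<cdot>\<^sub>m A" by (rule eq_matI) auto
    then show ?thesis unfolding Kq_def A_def[symmetric] M_eq n_eq by simp
  qed
  have spA: "u \<bullet> (A *\<^sub>v u) = c0 * (u \<bullet> (Bmat (2^q) *\<^sub>v u))" if u: "u \<in> carrier_vec n" for u
    unfolding A_eq by (rule sp_smult_mat[OF B u])
  have psd: "\<forall>u\<in>carrier_vec n. 0 \<le> u \<bullet> (A *\<^sub>v u)"
  proof
    fix u :: "real vec" assume u: "u \<in> carrier_vec n"
    have "0 \<le> u \<bullet> (Bmat (2^q) *\<^sub>v u)" by (rule B_psd[OF Nm]) (use m2 u n_eq in auto)
    then show "0 \<le> u \<bullet> (A *\<^sub>v u)" unfolding spA[OF u] using c0 by simp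
  qed
  have pd: "0 < u \<bullet> (A *\<^sub>v u)" if u: "u \<in> carrier_vec n" and nz: "u \<noteq> 0\<^sub>v n" for u
  proof -
    have "0 < u \<bullet> (Bmat (2^q) *\<^sub>v u)" by (rule B_pd[OF Nm]) (use m2 u nz n_eq in auto)
    then show ?thesis unfolding spA[OF u] using c0 by simp
  qed
  define R where "R = restr q"
  have R: "R \<in> carrier_mat (m-1) n" unfolding R_def using restr_carrier[of q] unfolding nc_eq n_eq .
  define P where "P = prolong q"
  have PR: "P = 2 \<cdot>\<^sub>m transpose_mat R" unfolding P_def R_def prolong_def ..
  have P: "P \<in> carrier_mat n (m-1)" unfolding PR using R by simp
  have Ac_eq: "Acoarse q b = R * A * P" unfolding Acoarse_def R_def A_def P_def ..
  have Ac: "R * A * P \<in> carrier_mat (m-1) (m-1)" using R Acar P by auto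
  have inj: "(R * A * P) *\<^sub>v z \<noteq> 0\<^sub>v (m-1)" if z: "z \<in> carrier_vec (m-1)" and nz: "z \<noteq> 0\<^sub>v (m-1)" for z
  proof
    assume Az: "(R * A * P) *\<^sub>v z = 0\<^sub>v (m-1)"
    have Pz: "P *\<^sub>v z \<in> carrier_vec n" using P z by auto
    have APz: "A *\<^sub>v (P *\<^sub>v z) \<in> carrier_vec n" using Acar Pz by auto
    obtain i where i: "i < m - 1" and zi: "z $ i \<noteq> 0"
      using nz z by (metis carrier_vecD eq_vecI index_zero_vec(1) index_zero_vec(2))
    have RT: "transpose_mat R \<in> carrier_mat n (m-1)" using R by simp
    have PzE: "P *\<^sub>v z = 2 \<cdot>\<^sub>v (transpose_mat R *\<^sub>v z)" unfolding PR by (rule smult_mat_vec[OF RT z])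
    have "(P *\<^sub>v z) $ (2*i+1) = 2 * (transpose_mat R *\<^sub>v z) $ (2*i+1)"
      unfolding PzE using RT i unfolding n_def by simp
    also have "\<dots> = z $ i"
      unfolding R_def by (subst RT_entry[OF Nm z]) (use i in auto)
    finally have "P *\<^sub>v z \<noteq> 0\<^sub>v n" using zi i unfolding n_def by auto
    then have pos: "0 < (P *\<^sub>v z) \<bullet> (A *\<^sub>v (P *\<^sub>v z))" using pd Pz by blast
    have RAPz: "(R * A * P) *\<^sub>v z = R *\<^sub>v (A *\<^sub>v (P *\<^sub>v z))"
    proof -
      have c: "R * A \<in> carrier_mat (m-1) n" using R Acar by auto
      have "(R * A * P) *\<^sub>v z = (R * A) *\<^sub>v (P *\<^sub>v z)" by (rule assoc_mult_mat_vec[OF c P z])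
      also have "\<dots> = R *\<^sub>v (A *\<^sub>v (P *\<^sub>v z))" by (rule assoc_mult_mat_vec[OF R Acar Pz])
      finally show ?thesis .
    qed
    have RTz: "transpose_mat R *\<^sub>v z \<in> carrier_vec n" using R z by auto
    have "(P *\<^sub>v z) \<bullet> (A *\<^sub>v (P *\<^sub>v z)) = 2 * ((transpose_mat R *\<^sub>v z) \<bullet> (A *\<^sub>v (P *\<^sub>v z)))"
      using smult_scalar_prod_distrib[OF RTz APz, of 2] unfolding PzE[symmetric] .
    also have "(transpose_mat R *\<^sub>v z) \<bullet> (A *\<^sub>v (P *\<^sub>v z)) = z \<bullet> (R *\<^sub>v (A *\<^sub>v (P *\<^sub>v z)))"
      by (rule transpose_vec_mult_scalar[OF R APz z])
    also have "\<dots> = 0" unfolding RAPz[symmetric] Az using z by simp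
    finally show False using pos by simp
  qed
  define G where "G = minv (R * A * P)"
  have G: "G \<in> carrier_mat (m-1) (m-1)" and AcG: "(R * A * P) * G = 1\<^sub>m (m-1)"
    using minv_ok[OF Ac inj] unfolding G_def by auto
  have T_eq: "Tq q b = 1\<^sub>m n - P * G * R * A"
    unfolding Tq_def n_eq G_def Acoarse_def P_def R_def A_def ..
  have approx: "\<forall>w\<in>carrier_vec n. \<exists>z\<in>carrier_vec (m-1).
         dA * ((w - P *\<^sub>v z) \<bullet> (w - P *\<^sub>v z)) \<le> 4 * (w \<bullet> (A *\<^sub>v w))"
  proof
    fix w :: "real vec" assume w: "w \<in> carrier_vec n"
    define z where "z = vec (m-1) (\<lambda>i. w $ (2*i+1))"
    have z: "z \<in> carrier_vec (m-1)" unfolding z_def by simp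
    have w': "w \<in> carrier_vec (2*m-1)" using w unfolding n_def .
    have e: "(w - P *\<^sub>v z) \<bullet> (w - P *\<^sub>v z) = (\<Sum>i<m. (rr (xof (2*m) w) i)^2)"
      unfolding PR R_def by (rule approx_B[OF Nm _ w' z_def]) (use m2 in simp)
    have wB: "w \<bullet> (Bmat (2^q) *\<^sub>v w) \<ge> real m / 3 * (\<Sum>i<m. (rr (xof (2^q) w) i)^2 + 4 * (tt (xof (2^q) w) i)^2)"
      by (rule B_lower[OF Nm]) (use m2 w n_eq in auto)
    have "(\<Sum>i<m. (rr (xof (2*m) w) i)^2) \<le> (\<Sum>i<m. (rr (xof (2*m) w) i)^2 + 4 * (tt (xof (2*m) w) i)^2)"
      by (intro sum_mono) auto
    then have s: "real m / 3 * (\<Sum>i<m. (rr (xof (2*m) w) i)^2) \<le> w \<bullet> (Bmat (2^q) *\<^sub>v w)"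
      using wB unfolding Nm by (smt (verit) divide_nonneg_nonneg mult_left_mono of_nat_0_le_iff)
    have dA': "dA \<le> c0 * (4 * real m / 3)" unfolding dA_def Nm using c0 by (simp add: field_simps)
    have S0: "0 \<le> (\<Sum>i<m. (rr (xof (2*m) w) i)^2)" by (intro sum_nonneg) auto
    have "dA * (\<Sum>i<m. (rr (xof (2*m) w) i)^2) \<le> c0 * (4 * real m / 3) * (\<Sum>i<m. (rr (xof (2*m) w) i)^2)"
      by (rule mult_right_mono[OF dA' S0])
    also have "\<dots> = 4 * c0 * (real m / 3 * (\<Sum>i<m. (rr (xof (2*m) w) i)^2))" by simp
    also have "\<dots> \<le> 4 * c0 * (w \<bullet> (Bmat (2^q) *\<^sub>v w))" by (rule mult_left_mono[OF s]) (use c0 in simp)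
    also have "\<dots> = 4 * (w \<bullet> (A *\<^sub>v w))" unfolding spA[OF w] by simp
    finally have "dA * ((w - P *\<^sub>v z) \<bullet> (w - P *\<^sub>v z)) \<le> 4 * (w \<bullet> (A *\<^sub>v w))"
      unfolding e .
    then show "\<exists>z\<in>carrier_vec (m-1). dA * ((w - P *\<^sub>v z) \<bullet> (w - P *\<^sub>v z)) \<le> 4 * (w \<bullet> (A *\<^sub>v w))"
      using z by blast
  qed
  define Mm where "Mm = (1/dA) \<cdot>\<^sub>m A"
  have Mm: "Mm \<in> carrier_mat n n" unfolding Mm_def using Acar by simp
  have Mmsym: "transpose_mat Mm = Mm"
  proof -
    have Aent: "A $$ (j,i) = A $$ (i,j)" if "i < n" "j < n" for i j
      using arg_cong[OF Asym, of "\<lambda>M. M $$ (i,j)"] that Acar by simp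
    show ?thesis unfolding Mm_def by (rule eq_matI) (use Acar Aent in auto)
  qed
  have npos: "n > 0" unfolding n_def using m2 by simp
  obtain lam where lam: "eigenvalue Mm lam" and ray_lam: "\<forall>u\<in>carrier_vec n. u \<bullet> (Mm *\<^sub>v u) \<le> lam * (u \<bullet> u)"
    using rayleigh_eig[OF Mm Mmsym npos] by blast
  have "lam \<le> lambda_max Mm" unfolding lambda_max_def using eig_finite[OF Mm] lam by simp
  also have "lambda_max Mm \<le> \<eta>0" using lmax unfolding Mm_def A_def[symmetric] M_eq .
  finally have lam_eta0: "lam \<le> \<eta>0" .
  have spM: "u \<bullet> (Mm *\<^sub>v u) = (1/dA) * (u \<bullet> (A *\<^sub>v u))" if u: "u \<in> carrier_vec n" for u
    unfolding Mm_def by (rule sp_smult_mat[OF Acar u])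
  have lam1: "1 \<le> lam"
  proof -
    define e0 :: "real vec" where "e0 = unit_vec n 0"
    have e0: "e0 \<in> carrier_vec n" unfolding e0_def by simp
    have "e0 \<bullet> (A *\<^sub>v e0) = A $$ (0,0)" unfolding e0_def using Acar npos by simp
    also have "\<dots> = dA" unfolding A_eq dA_def using npos n_eq by (simp add: Bmat_def)
    finally have "e0 \<bullet> (Mm *\<^sub>v e0) = 1" unfolding spM[OF e0] using dA by simp
    moreover have "e0 \<bullet> e0 = 1" unfolding e0_def using npos by simp
    ultimately show ?thesis using ray_lam e0 by force
  qed
  have ray: "\<forall>u\<in>carrier_vec n. u \<bullet> (A *\<^sub>v u) \<le> \<eta>0 * dA * (u \<bullet> u)"
  proof
    fix u :: "real vec" assume u: "u \<in> carrier_vec n"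
    have uu: "0 \<le> u \<bullet> u" by (rule sp_self_nonneg)
    have "u \<bullet> (A *\<^sub>v u) = dA * (u \<bullet> (Mm *\<^sub>v u))" unfolding spM[OF u] using dA by simp
    also have "\<dots> \<le> dA * (lam * (u \<bullet> u))" using ray_lam u dA by (simp add: mult_left_mono)
    also have "\<dots> \<le> dA * (\<eta>0 * (u \<bullet> u))"
      by (intro mult_left_mono mult_right_mono lam_eta0 uu) (use dA in simp)
    finally show "u \<bullet> (A *\<^sub>v u) \<le> \<eta>0 * dA * (u \<bullet> u)" by (simp add: ac_simps)
  qed
  have eta01: "\<eta>0 \<ge> 1" using lam1 lam_eta0 by simp
  have eta_le1: "\<eta> \<le> 1"
  proof -
    have "\<eta>0 * (\<omega> * (2 - \<omega> * \<eta>0)) = 1 - (1 - \<omega> * \<eta>0)^2" by (simp add: power2_eq_square algebra_simps)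
    also have "\<dots> \<le> 1" by simp
    finally have "\<eta>0 * (\<omega> * (2 - \<omega> * \<eta>0)) \<le> 1" .
    then have "\<omega> * (2 - \<omega> * \<eta>0) \<le> 1"
      using eta01 by (smt (verit) mult_le_cancel_right1 mult.commute)
    then show ?thesis using eta by simp
  qed
  have claim1: "\<forall>v \<in> carrier_vec (2^q - 1).
            (vnormM (Aq q b) (Kq q b \<omega> *\<^sub>v v))^2
              \<le> (vnormM (Aq q b) v)^2
                 - \<eta> * (vnormM (diag_inv (diagpart (Aq q b))) (Aq q b *\<^sub>v v))^2"
  proof
    fix v :: "real vec" assume "v \<in> carrier_vec (2^q - 1)"
    then have v: "v \<in> carrier_vec n" unfolding n_eq .
    have Kv: "Kq q b \<omega> *\<^sub>v v \<in> carrier_vec n" unfolding K_eq by (rule mult_mat_vec_carrier[of _ n n]) (use Acar v in auto)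
    have Av: "A *\<^sub>v v \<in> carrier_vec n" using Acar v by simp
    have n1: "(vnormM A (Kq q b \<omega> *\<^sub>v v))^2 = (Kq q b \<omega> *\<^sub>v v) \<bullet> (A *\<^sub>v (Kq q b \<omega> *\<^sub>v v))"
      unfolding vnormM_def using psd Kv by simp
    have n2: "(vnormM A v)^2 = v \<bullet> (A *\<^sub>v v)" unfolding vnormM_def using psd v by simp
    have dd: "(A *\<^sub>v v) \<bullet> (diag_inv (diagpart A) *\<^sub>v (A *\<^sub>v v)) = (1/dA) * ((A *\<^sub>v v) \<bullet> (A *\<^sub>v v))"
      unfolding Dinv smult_mat_vec[OF one_carrier_mat Av] using Av by simp
    have n3: "(vnormM (diag_inv (diagpart A)) (A *\<^sub>v v))^2 = (1/dA) * ((A *\<^sub>v v) \<bullet> (A *\<^sub>v v))"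
      unfolding vnormM_def dd using dA sp_self_nonneg[of "A *\<^sub>v v"] by simp
    have "(Kq q b \<omega> *\<^sub>v v) \<bullet> (A *\<^sub>v (Kq q b \<omega> *\<^sub>v v)) \<le> v \<bullet> (A *\<^sub>v v) - \<eta> / dA * ((A *\<^sub>v v) \<bullet> (A *\<^sub>v v))"
      unfolding K_eq by (rule smoothing_abs[OF Acar Asym ray dA om eta v])
    then show "(vnormM (Aq q b) (Kq q b \<omega> *\<^sub>v v))^2
              \<le> (vnormM (Aq q b) v)^2
                 - \<eta> * (vnormM (diag_inv (diagpart (Aq q b))) (Aq q b *\<^sub>v v))^2"
      unfolding A_def[symmetric] n1 n2 n3 by simp
  qed
  have KT_eq: "Kq q b \<omega> * Tq q b = (1\<^sub>m n - (\<omega>/dA) \<cdot>\<^sub>m A) * (1\<^sub>m n - P * G * R * A)"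
    unfolding K_eq T_eq ..
  have dimKT: "dim_col (Kq q b \<omega> * Tq q b) = n" unfolding KT_eq using Acar by simp
  have claim2: "opnormM (Aq q b) (Kq q b \<omega> * Tq q b) \<le> sqrt (1 - \<eta> / 4)"
    unfolding opnormM_def A_def[symmetric] dimKT
  proof (rule cSup_least)
    show "{vnormM A ((Kq q b \<omega> * Tq q b) *\<^sub>v v) / vnormM A v |v. v \<in> carrier_vec n \<and> v \<noteq> 0\<^sub>v n} \<noteq> {}"
    proof -
      have u0: "(unit_vec n 0 :: real vec) \<noteq> 0\<^sub>v n"
      proof
        assume "(unit_vec n 0 :: real vec) = 0\<^sub>v n"
        then have "(unit_vec n 0 :: real vec) $ 0 = (0\<^sub>v n :: real vec) $ 0" by simp
        then show False using npos by simp
      qed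
      have "(unit_vec n 0 :: real vec) \<in> carrier_vec n \<and> (unit_vec n 0 :: real vec) \<noteq> 0\<^sub>v n"
        using u0 by simp
      then show ?thesis by blast
    qed
  next
    fix r assume "r \<in> {vnormM A ((Kq q b \<omega> * Tq q b) *\<^sub>v v) / vnormM A v |v. v \<in> carrier_vec n \<and> v \<noteq> 0\<^sub>v n}"
    then obtain v where v: "v \<in> carrier_vec n" and nz: "v \<noteq> 0\<^sub>v n"
      and r: "r = vnormM A ((Kq q b \<omega> * Tq q b) *\<^sub>v v) / vnormM A v" by blast
    have KTc: "Kq q b \<omega> * Tq q b \<in> carrier_mat n n" unfolding KT_eq using Acar P G R by auto
    have KTv: "(Kq q b \<omega> * Tq q b) *\<^sub>v v \<in> carrier_vec n" using KTc v by auto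
    have bound: "((Kq q b \<omega> * Tq q b) *\<^sub>v v) \<bullet> (A *\<^sub>v ((Kq q b \<omega> * Tq q b) *\<^sub>v v)) \<le> (1 - \<eta>/4) * (v \<bullet> (A *\<^sub>v v))"
      unfolding KT_eq
      by (rule twogrid_abs[OF Acar Asym psd R PR G AcG approx ray dA om eta _ _ v])
         (use eta_le1 etapos in auto)
    have vpos: "0 < v \<bullet> (A *\<^sub>v v)" by (rule pd[OF v nz])
    have "vnormM A ((Kq q b \<omega> * Tq q b) *\<^sub>v v) \<le> sqrt ((1 - \<eta>/4) * (v \<bullet> (A *\<^sub>v v)))"
      unfolding vnormM_def using bound by (rule real_sqrt_le_mono)
    also have "\<dots> = sqrt (1 - \<eta>/4) * vnormM A v" unfolding vnormM_def by (simp add: real_sqrt_mult)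
    finally have le: "vnormM A ((Kq q b \<omega> * Tq q b) *\<^sub>v v) \<le> sqrt (1 - \<eta>/4) * vnormM A v" .
    have vn: "vnormM A v > 0" unfolding vnormM_def using vpos by simp
    show "r \<le> sqrt (1 - \<eta> / 4)" unfolding r using le vn by (simp add: divide_le_eq)
  qed
  have claim3: "sqrt (1 - \<eta> / 4) < 1" using etapos by simp
  show ?thesis using claim1 claim2 claim3 by blast
qed

end
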